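(* Let $u,v$ be rational numbers with $u^2-3v^2=1$. Then $$x_1=1,\quad x_2=2v,\quad y_1=4v^2+1,\quad y_2=2v(2v^2+1),\quad z_1=4uv^2,\quad z_2=8v^4+4v^2+1$$ satisfy $(x_1^4+x_2^4)(y_1^4+y_2^4)=z_1^4+z_2^4$. In fact, for arbitrary $u,v$, the difference $z_1^4+z_2^4-(x_1^4+x_2^4)(y_1^4+y_2^4)$ with these values equals, up to sign, $256v^8(u^2+3v^2+1)(u^2-3v^2-1)$. In particular, every integer solution $(u,v)$ of the Pell equation $u^2-3v^2=1$ yields an integer solution of this quartic equation, so the equation has infinitely many integer solutions with $x_1=1$. *)

theory Defs
  imports Complex_Main
begin

definition quartic_tuple :: "'a::comm_ring_1 \<Rightarrow> 'a \<Rightarrow> 'a \<times> 'a \<times> 'a \<times> 'a \<times> 'a \<times> 'a" where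
  "quartic_tuple u v = (1, 2*v, 4*v^2 + 1, 2*v*(2*v^2 + 1), 4*u*v^2, 8*v^4 + 4*v^2 + 1)"

definition quartic_eq :: "'a::comm_ring_1 \<times> 'a \<times> 'a \<times> 'a \<times> 'a \<times> 'a \<Rightarrow> bool" where
  "quartic_eq t = (case t of (x1, x2, y1, y2, z1, z2) \<Rightarrow>
     (x1^4 + x2^4) * (y1^4 + y2^4) = z1^4 + z2^4)"

end

theory Submission
  imports Defs
begin

lemma diff_id:
  fixes u v :: "'a::comm_ring_1"
  shows "(case quartic_tuple u v of (x1, x2, y1, y2, z1, z2) \<Rightarrow>
            z1^4 + z2^4 - (x1^4 + x2^4) * (y1^4 + y2^4))
         = 256 * v^8 * (u^2 + 3*v^2 + 1) * (u^2 - 3*v^2 - 1)"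
  unfolding quartic_tuple_def prod.case by (simp add: eval_nat_numeral algebra_simps)

lemma sol:
  fixes u v :: "'a::comm_ring_1"
  assumes "u^2 - 3*v^2 = 1"
  shows "quartic_eq (quartic_tuple u v)"
proof -
  have "u^2 - 3*v^2 - 1 = 0" using assms by simp
  hence "256 * v^8 * (u^2 + 3*v^2 + 1) * (u^2 - 3*v^2 - 1) = 0" by simp
  hence "(case quartic_tuple u v of (x1, x2, y1, y2, z1, z2) \<Rightarrow>
            z1^4 + z2^4 - (x1^4 + x2^4) * (y1^4 + y2^4)) = 0" using diff_id by metis
  thus ?thesis unfolding quartic_eq_def quartic_tuple_def by simp
qed

fun pell :: "nat \<Rightarrow> int \<times> int" where
  "pell 0 = (1, 0)"
| "pell (Suc n) = (case pell n of (u, v) \<Rightarrow> (2*u + 3*v, u + 2*v))"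

lemma pell_props: "fst (pell n) \<ge> 1 \<and> snd (pell n) \<ge> 0 \<and> (fst (pell n))^2 - 3*(snd (pell n))^2 = 1"
proof (induction n)
  case 0 then show ?case by simp
next
  case (Suc n)
  obtain u v where e: "pell n = (u, v)" by fastforce
  with Suc show ?case by (simp add: power2_eq_square algebra_simps)
qed

lemma pell_mono: "strict_mono (\<lambda>n. snd (pell n))"
proof -
  have "\<And>n. snd (pell n) < snd (pell (Suc n))"
  proof -
  fix n
  obtain u v where e: "pell n = (u, v)" by fastforce
  with pell_props[of n] show "snd (pell n) < snd (pell (Suc n))" by simp
qed
  thus ?thesis by (simp add: strict_mono_Suc_iff)
qed

theorem mainTheorem9:
  shows "(\<forall>u v :: rat. u^2 - 3*v^2 = 1 \<longrightarrow> quartic_eq (quartic_tuple u v))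
     \<and> (\<forall>u v :: rat. (case quartic_tuple u v of (x1, x2, y1, y2, z1, z2) \<Rightarrow>
            z1^4 + z2^4 - (x1^4 + x2^4) * (y1^4 + y2^4))
          \<in> {256 * v^8 * (u^2 + 3*v^2 + 1) * (u^2 - 3*v^2 - 1),
             - (256 * v^8 * (u^2 + 3*v^2 + 1) * (u^2 - 3*v^2 - 1))})
     \<and> (\<forall>u v :: int. u^2 - 3*v^2 = 1 \<longrightarrow> quartic_eq (quartic_tuple u v))
     \<and> infinite {t :: int \<times> int \<times> int \<times> int \<times> int \<times> int. quartic_eq t \<and> fst t = 1}
     \<and> infinite {quartic_tuple u v | u v :: int. u^2 - 3*v^2 = 1}"
proof -
  let ?S = "{quartic_tuple u v | u v :: int. u^2 - 3*v^2 = 1}"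
  let ?g = "\<lambda>n. quartic_tuple (fst (pell n)) (snd (pell n)) :: int \<times> int \<times> int \<times> int \<times> int \<times> int"
  have sub: "range ?g \<subseteq> ?S" using pell_props by blast
  have inj: "inj ?g"
  proof (rule injI)
    fix m n assume "?g m = ?g n"
    hence "2 * snd (pell m) = 2 * snd (pell n)" unfolding quartic_tuple_def by simp
    hence "snd (pell m) = snd (pell n)" by simp
    thus "m = n" using strict_mono_eq[OF pell_mono] by blast
  qed
  have infS: "infinite ?S"
    using sub inj finite_imageD finite_subset by blast
  have "?S \<subseteq> {t. quartic_eq t \<and> fst t = 1}"
    using sol by (auto simp: quartic_tuple_def)
  hence inf2: "infinite {t :: int \<times> int \<times> int \<times> int \<times> int \<times> int. quartic_eq t \<and> fst t = 1}"
    using infS finite_subset by blast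
  have r: "\<forall>u v :: rat. u^2 - 3*v^2 = 1 \<longrightarrow> quartic_eq (quartic_tuple u v)" using sol by blast
  have i: "\<forall>u v :: int. u^2 - 3*v^2 = 1 \<longrightarrow> quartic_eq (quartic_tuple u v)" using sol by blast
  have d: "\<forall>u v :: rat. (case quartic_tuple u v of (x1, x2, y1, y2, z1, z2) \<Rightarrow>
            z1^4 + z2^4 - (x1^4 + x2^4) * (y1^4 + y2^4))
          \<in> {256 * v^8 * (u^2 + 3*v^2 + 1) * (u^2 - 3*v^2 - 1),
             - (256 * v^8 * (u^2 + 3*v^2 + 1) * (u^2 - 3*v^2 - 1))}"
    by (intro allI, subst diff_id) simp
  show ?thesis using d r i infS inf2 by blast
qed

end
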